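(* Let $n>1$ be square-free and let $r,t\in\mathbb{Z}$ with $\gcd(r,n)=1$. Then \[\mathsf{c}(V_n,a_{n,r,t})=\sum_{(d,\ell)}\frac{d}{\kappa(n,r,t)}\,\phi\!\left(\frac{|r|_n}{\ell\,\gcd\left(\kappa(d,r,t),|r|_n\right)}\right),\] where the sum runs over all pairs of positive integers $(d,\ell)$ such that $d\mid n$, $\ell$ divides $\dfrac{|r|_n}{\gcd\left(\kappa(d,r,t),|r|_n\right)}$, and $\gcd\left(r^{\ell\kappa(d,r,t)}-1,\,n\right)=d$.
   Context: $\mathrm{D}_{2n}=\langle u_n,v_n\mid u_n^n=1=v_n^2,\ v_nu_nv_n=u_n^{-1}\rangle$. For integers $r,t$ with $\gcd(r,n)=1$, $a_{n,r,t}$ is the automorphism of $\mathrm{D}_{2n}$ with $u_n^i\mapsto u_n^{ri}$, $u_n^jv_n\mapsto u_n^{rj+t}v_n$. $V_n:=\{u_n^iv_n: 0\leq i\leq n-1\}$, and $\mathsf{c}(V_n,a)$ is the number of cycles (including fixed points) of the permutation induced by $a$ on $V_n$. For $m\geq1$ with $\gcd(r,m)=1$, $|r|_m$ is the multiplicative order of $r$ mod $m$ (so $|r|_1=1$). $S_k(x):=1+x+\cdots+x^{k-1}$ ($S_0=0$), and $\kappa(m,r,t):=\dfrac{m\,|r|_m}{\gcd\left(m,\ t\,S_{|r|_m}(r)\right)}$. $\phi$ is Euler's function. *)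

theory Defs
  imports "HOL-Number_Theory.Number_Theory" "HOL-Computational_Algebra.Squarefree"
begin

text \<open>Elements of D_{2n}: (i, False) stands for u_n^i and (i, True) for u_n^i v_n, 0 \<le> i < n.\<close>
type_synonym dihedral_elem = "int \<times> bool"

definition dihedral_carrier :: "nat \<Rightarrow> dihedral_elem set" where
  "dihedral_carrier n = {0..<int n} \<times> UNIV"

definition dihedral_aut :: "nat \<Rightarrow> int \<Rightarrow> int \<Rightarrow> dihedral_elem \<Rightarrow> dihedral_elem" where
  "dihedral_aut n r t x =
     (if snd x then ((r * fst x + t) mod int n, True) else ((r * fst x) mod int n, False))"

definition V :: "nat \<Rightarrow> dihedral_elem set" where
  "V n = {(i, True) | i. 0 \<le> i \<and> i < int n}"

definition num_cycles :: "'a set \<Rightarrow> ('a \<Rightarrow> 'a) \<Rightarrow> nat" where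
  "num_cycles A f = card ((\<lambda>x. {(f ^^ k) x | k. True}) ` A)"

definition mord :: "nat \<Rightarrow> int \<Rightarrow> nat" where
  "mord m r = (LEAST k. 0 < k \<and> [r ^ k = 1] (mod int m))"

definition S :: "nat \<Rightarrow> int \<Rightarrow> int" where
  "S k x = (\<Sum>i<k. x ^ i)"

definition kappa :: "nat \<Rightarrow> int \<Rightarrow> int \<Rightarrow> nat" where
  "kappa m r t = nat ((int m * int (mord m r)) div gcd (int m) (t * S (mord m r) r))"

end

theory Submission
  imports Defs
begin


lemma S_Suc': "S (Suc k) x = 1 + x * S k x"
  unfolding S_def by (subst sum.lessThan_Suc_shift) (simp add: sum_distrib_left)

lemma S_geom: "(x - 1) * S k x = x ^ k - 1"
  by (induction k) (simp_all add: S_def algebra_simps)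

lemma S_add: "S (a + b) x = S a x + x ^ a * S b x"
  unfolding S_def by (induction b) (simp_all add: algebra_simps power_add)

lemma cong_int_nat_pow:
  assumes "m > 0"
  shows "[r ^ k = 1] (mod int m) \<longleftrightarrow> [nat (r mod int m) ^ k = 1] (mod m)"
proof -
  have e: "int (nat (r mod int m)) = r mod int m" using assms by simp
  have "[r ^ k = 1] (mod int m) \<longleftrightarrow> [(r mod int m) ^ k = 1] (mod int m)"
    by (simp add: cong_def power_mod)
  also have "\<dots> \<longleftrightarrow> [int (nat (r mod int m) ^ k) = int 1] (mod int m)"
    using e by simp
  also have "\<dots> \<longleftrightarrow> [nat (r mod int m) ^ k = 1] (mod m)"
    by (rule cong_int_iff)
  finally show ?thesis .
qed

lemma cp_nat_mod:
  assumes "m > 0" "coprime r (int m)"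
  shows "coprime m (nat (r mod int m))"
proof -
  have e: "int (nat (r mod int m)) = r mod int m" using assms by simp
  have "coprime (r mod int m) (int m)" using assms by simp
  then have "gcd (int m) (int (nat (r mod int m))) = 1" unfolding e
    by (simp add: coprime_iff_gcd_eq_1 gcd.commute)
  then have "gcd m (nat (r mod int m)) = 1"
    by (simp only: gcd_int_int_eq)
  then show ?thesis by (simp only: coprime_iff_gcd_eq_1)
qed

lemma mord_ord:
  assumes "m > 0" "coprime r (int m)"
  shows "mord m r = ord m (nat (r mod int m))"
  unfolding mord_def ord_def using cp_nat_mod[OF assms] cong_int_nat_pow[OF assms(1)] by simp

lemma mord_dvd:
  assumes "m > 0" "coprime r (int m)"
  shows "[r ^ k = 1] (mod int m) \<longleftrightarrow> mord m r dvd k"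
  using mord_ord[OF assms] cong_int_nat_pow[OF assms(1)] ord_divides by simp

lemma mord_pos:
  assumes "m > 0" "coprime r (int m)"
  shows "mord m r > 0"
  using mord_ord[OF assms] ord_gt_0_iff cp_nat_mod[OF assms] by simp

lemma mord_dvd': 
  assumes "m > 0" "coprime r (int m)"
  shows "int m dvd r ^ k - 1 \<longleftrightarrow> mord m r dvd k"
proof -
  have "int m dvd r ^ k - 1 \<longleftrightarrow> [r ^ k = 1] (mod int m)"
    by (simp add: cong_iff_dvd_diff)
  then show ?thesis using mord_dvd[OF assms] by simp
qed



lemma S_period:
  assumes "[r ^ w = 1] (mod m)"
  shows "[S (w * j) r = int j * S w r] (mod m)"
proof (induction j)
  case 0 then show ?case by (simp add: S_def)
next
  case (Suc j)
  have "S (w * Suc j) r = S (w * j) r + r ^ (w * j) * S w r"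
    by (simp add: S_add[symmetric] add.commute)
  moreover have "[r ^ (w * j) = 1] (mod m)"
    using cong_pow[OF assms, of j] by (simp add: power_mult)
  ultimately have "[S (w * Suc j) r = int j * S w r + 1 * S w r] (mod m)"
    using Suc by (metis cong_add cong_mult cong_refl)
  then show ?case by (simp add: algebra_simps)
qed

lemma dvd_mult_div_gcd_int:
  fixes d c j :: int
  assumes "d > 0"
  shows "d dvd j * c \<longleftrightarrow> d div gcd d c dvd j"
proof -
  define g where "g = gcd d c"
  have g0: "g > 0" using assms by (simp add: g_def)
  obtain q where q: "d = g * q" unfolding g_def by (metis gcd_dvd1 dvd_def)
  obtain c' where c': "c = g * c'" unfolding g_def by (metis gcd_dvd2 dvd_def)
  have qd: "d div g = q" using q g0 by simp
  have cd: "c div g = c'" using c' g0 by simp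
  have "coprime q c'"
    using div_gcd_coprime[of d c] assms qd cd unfolding g_def by auto
  have "d dvd j * c \<longleftrightarrow> g * q dvd g * (j * c')" using q c' by (simp add: algebra_simps)
  also have "\<dots> \<longleftrightarrow> q dvd j * c'" using g0 by simp
  also have "\<dots> \<longleftrightarrow> q dvd j" using \<open>coprime q c'\<close> by (simp add: coprime_dvd_mult_left_iff)
  finally show ?thesis unfolding g_def[symmetric] qd .
qed

lemma kappa_dvd:
  assumes "d > 0" "coprime r (int d)"
  shows "(int d dvd r ^ k - 1 \<and> int d dvd t * S k r) \<longleftrightarrow> kappa d r t dvd k"
proof -
  define w where "w = mord d r"
  define c where "c = t * S w r"
  define q where "q = int d div gcd (int d) c"
  have o0: "w > 0" using mord_pos[OF assms] by (simp add: w_def)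
  have g0: "gcd (int d) c > 0" using assms by simp
  have q0: "q > 0" unfolding q_def using assms g0
    by (simp add: pos_imp_zdiv_pos_iff zdvd_imp_le)
  have kap: "kappa d r t = w * nat q"
  proof -
    have "int d * int w div gcd (int d) c = int w * q"
      unfolding q_def by (metis dvd_div_mult gcd_dvd1 mult.commute)
    then show ?thesis unfolding kappa_def w_def[symmetric] c_def[symmetric]
      using q0 by (simp add: nat_mult_distrib)
  qed
  have ro: "[r ^ w = 1] (mod int d)" using mord_dvd[OF assms] w_def by simp
  show ?thesis
  proof
    assume h: "int d dvd r ^ k - 1 \<and> int d dvd t * S k r"
    then have "w dvd k" using mord_dvd'[OF assms] w_def by simp
    then obtain j where j: "k = w * j" by (auto simp: dvd_def)
    have "[t * S k r = t * (int j * S w r)] (mod int d)"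
      unfolding j by (intro cong_scalar_left S_period ro)
    then have "int d dvd int j * c" using h unfolding c_def
      by (metis cong_dvd_iff mult.left_commute)
    then have "q dvd int j" unfolding q_def using dvd_mult_div_gcd_int assms by simp
    then have "int (nat q) dvd int j" using q0 by simp
    then have "nat q dvd j" by (simp only: int_dvd_int_iff)
    then show "kappa d r t dvd k" unfolding kap j by simp
  next
    assume "kappa d r t dvd k"
    then obtain j where j: "k = w * nat q * j" unfolding kap by (auto simp: dvd_def)
    have "w dvd k" using j by simp
    then have h1: "int d dvd r ^ k - 1" using mord_dvd'[OF assms] w_def by simp
    have "[t * S k r = t * (int (nat q * j) * S w r)] (mod int d)"
      unfolding j mult.assoc by (intro cong_scalar_left S_period ro)
    moreover have "int d dvd int (nat q * j) * c"
      using dvd_mult_div_gcd_int[of "int d" "int (nat q * j)" c] assms q0 unfolding q_def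
      by simp
    ultimately have "int d dvd t * S k r" unfolding c_def
      by (metis cong_dvd_iff mult.left_commute)
    with h1 show "int d dvd r ^ k - 1 \<and> int d dvd t * S k r" by simp
  qed
qed



lemma funpow_period_mult:
  assumes "(f ^^ P) x = x"
  shows "(f ^^ (P * q)) x = x"
proof (induction q)
  case 0 then show ?case by simp
next
  case (Suc q)
  have "(f ^^ (P * Suc q)) x = (f ^^ P) ((f ^^ (P * q)) x)"
    by (simp add: funpow_add add.commute)
  then show ?case using Suc assms by simp
qed

lemma funpow_period_mod:
  assumes "(f ^^ P) x = x"
  shows "(f ^^ k) x = (f ^^ (k mod P)) x"
proof -
  have "(f ^^ (k mod P)) x = (f ^^ (k mod P)) ((f ^^ (P * (k div P))) x)"
    using funpow_period_mult[OF assms] by simp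
  also have "\<dots> = (f ^^ (k mod P + P * (k div P))) x" by (simp only: funpow_add comp_apply)
  also have "\<dots> = (f ^^ k) x" by (simp only: mod_mult_div_eq)
  finally show ?thesis by simp
qed

lemma funpow_closed:
  assumes "\<forall>x\<in>X. f x \<in> X" "x \<in> X"
  shows "(f ^^ k) x \<in> X"
  using assms by (induction k) auto

lemma card_multiples:
  assumes "p > 0" "p dvd (K::nat)"
  shows "card {k\<in>{0<..K}. p dvd k} = K div p"
proof -
  have "{k\<in>{0<..K}. p dvd k} = (\<lambda>i. p * i) ` {0<..K div p}"
  proof (intro equalityI subsetI)
    fix k assume "k \<in> {k\<in>{0<..K}. p dvd k}"
    then obtain i where i: "k = p * i" "0 < k" "k \<le> K" by (auto simp: dvd_def)
    then have "i \<le> K div p" using assms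
      by (metis div_le_mono nonzero_mult_div_cancel_left not_gr0)
    moreover have "i > 0" using i by auto
    ultimately show "k \<in> (\<lambda>i. p * i) ` {0<..K div p}" using i by auto
  next
    fix k assume "k \<in> (\<lambda>i. p * i) ` {0<..K div p}"
    then obtain i where i: "k = p * i" "0 < i" "i \<le> K div p" using imageE greaterThanAtMost_iff by (metis (no_types, lifting))
    have "p * i \<le> p * (K div p)" using i by simp
    also have "\<dots> = K" using assms by simp
    finally show "k \<in> {k\<in>{0<..K}. p dvd k}" using i assms by auto
  qed
  moreover have "inj_on (\<lambda>i. p * i) {0<..K div p}" using assms by (auto intro: inj_onI)
  ultimately show ?thesis by (simp add: card_image)
qed



lemma card_filter_of_bool:
  assumes "finite A"
  shows "card {x\<in>A. P x} = (\<Sum>x\<in>A. (of_bool (P x) :: nat))"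
proof -
  have "{x\<in>A. P x} = A \<inter> {x. P x}" by blast
  then show ?thesis using assms by simp
qed

lemma burnside_cyclic:
  fixes f :: "'a \<Rightarrow> 'a"
  assumes fin: "finite X" and cl: "\<forall>x\<in>X. f x \<in> X"
    and per: "\<forall>x\<in>X. (f ^^ K) x = x" and K0: "K > 0"
  shows "K * num_cycles X f = (\<Sum>k\<in>{0<..K}. card {x\<in>X. (f ^^ k) x = x})"
proof -
  define orb where "orb x = {(f ^^ k) x | k. True}" for x
  define p where "p x = (LEAST k. 0 < k \<and> (f ^^ k) x = x)" for x
  have pP: "0 < p x \<and> (f ^^ p x) x = x" if "x \<in> X" for x
    unfolding p_def by (rule LeastI[of _ K]) (use K0 per that in auto)
  have pmin: "\<not> (f ^^ k) x = x" if "0 < k" "k < p x" for x k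
    using not_less_Least[of k "\<lambda>k. 0 < k \<and> (f ^^ k) x = x"] that unfolding p_def by auto
  have pdvd: "(f ^^ k) x = x \<longleftrightarrow> p x dvd k" if "x \<in> X" for x k
  proof
    assume h: "(f ^^ k) x = x"
    have "(f ^^ (k mod p x)) x = x" using funpow_period_mod[where f=f and P="p x" and x=x and k=k] pP[OF that] h by simp
    moreover have "k mod p x < p x" using pP[OF that] by simp
    ultimately have "k mod p x = 0" using pmin by (metis neq0_conv)
    then show "p x dvd k" by auto
  next
    assume "p x dvd k"
    then obtain q where "k = p x * q" by (auto simp: dvd_def)
    then show "(f ^^ k) x = x" using funpow_period_mult[where f=f and P="p x" and x=x and q=q] pP[OF that] by simp
  qed
  have pK: "p x dvd K" if "x \<in> X" for x using pdvd[OF that, of K] per that by simp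
  have orb_eq: "orb x = (\<lambda>k. (f ^^ k) x) ` {..<p x}" if "x \<in> X" for x
  proof (intro equalityI subsetI)
    fix y assume "y \<in> orb x"
    then obtain k where "y = (f ^^ k) x" unfolding orb_def by auto
    then have "y = (f ^^ (k mod p x)) x" using funpow_period_mod[where f=f and P="p x" and x=x and k=k] pP[OF that] by simp
    moreover have "k mod p x < p x" using pP[OF that] by simp
    ultimately show "y \<in> (\<lambda>k. (f ^^ k) x) ` {..<p x}" by auto
  qed (auto simp: orb_def)
  have inj: "inj_on (\<lambda>k. (f ^^ k) x) {..<p x}" if "x \<in> X" for x
  proof -
    have *: "i = j" if "i < p x" "j < p x" "i \<le> j" "(f ^^ i) x = (f ^^ j) x" for i j
    proof (rule ccontr)
      assume "i \<noteq> j"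
      then have ij: "i < j" using that by simp
      have e1: "(f ^^ (p x - j + i)) x = (f ^^ (p x - j)) ((f ^^ i) x)" by (simp only: funpow_add comp_apply)
      have e3: "(f ^^ (p x - j)) ((f ^^ j) x) = (f ^^ (p x - j + j)) x" by (simp only: funpow_add comp_apply)
      have e4: "p x - j + j = p x" using that by simp
      have "(f ^^ (p x - j + i)) x = (f ^^ (p x)) x" using e1 e3 e4 that(4) by simp
      also have "\<dots> = x" using pP[OF \<open>x \<in> X\<close>] by simp
      finally have "(f ^^ (p x - j + i)) x = x" .
      moreover have "0 < p x - j + i" "p x - j + i < p x" using ij that(1,2) by auto
      ultimately show False using pmin[where x=x and k="p x - j + i"] by metis
    qed
    show ?thesis
    proof (rule inj_onI)
      fix i j assume "i \<in> {..<p x}" "j \<in> {..<p x}" "(f ^^ i) x = (f ^^ j) x"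
      then have h: "i < p x" "j < p x" "(f ^^ i) x = (f ^^ j) x" by auto
      show "i = j"
      proof (cases "i \<le> j")
        case True then show ?thesis using *[OF h(1) h(2) True h(3)] by simp
      next
        case False then have "j \<le> i" by simp
        then show ?thesis using *[OF h(2) h(1) _ h(3)[symmetric]] by simp
      qed
    qed
  qed
  have card_orb: "card (orb x) = p x" if "x \<in> X" for x
    using orb_eq[OF that] inj[OF that] by (simp add: card_image)
  have orb_sub: "orb x \<subseteq> X" if "x \<in> X" for x
    using funpow_closed[OF cl that] unfolding orb_def by auto
  have orb_same: "orb y = orb x" if xX: "x \<in> X" and yo: "y \<in> orb x" for x y
  proof -
    obtain j where j: "y = (f ^^ j) x" using yo by (auto simp: orb_def)
    have a: "orb y \<subseteq> orb x"
    proof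
      fix z assume "z \<in> orb y"
      then obtain k where "z = (f ^^ k) y" unfolding orb_def by auto
      then have "z = (f ^^ (k + j)) x" using j by (simp add: funpow_add)
      then show "z \<in> orb x" unfolding orb_def by auto
    qed
    have xy: "(f ^^ ((K - 1) * j)) y = x"
    proof -
      have "(f ^^ ((K - 1) * j)) y = (f ^^ ((K - 1) * j + j)) x" using j by (simp add: funpow_add)
      also have "(K - 1) * j + j = K * j" using K0 by (simp add: algebra_simps)
      also have "(f ^^ (K * j)) x = x" using funpow_period_mult[where f=f and P=K and x=x and q=j] per xX by simp
      finally show ?thesis .
    qed
    have b: "orb x \<subseteq> orb y"
    proof
      fix z assume "z \<in> orb x"
      then obtain k where "z = (f ^^ k) x" unfolding orb_def by auto
      then have "z = (f ^^ (k + (K - 1) * j)) y" using xy by (simp add: funpow_add)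
      then show "z \<in> orb y" unfolding orb_def by auto
    qed
    from a b show ?thesis by blast
  qed
  have self: "x \<in> orb x" for x unfolding orb_def by (auto intro: exI[of _ 0])
  have fiber: "{x \<in> X. orb x = orb x0} = orb x0" if x0X: "x0 \<in> X" for x0
  proof (intro equalityI subsetI)
    fix x assume "x \<in> {x \<in> X. orb x = orb x0}"
    then have "orb x = orb x0" by simp
    then show "x \<in> orb x0" using self[of x] by simp
  next
    fix x assume xo: "x \<in> orb x0"
    then have "x \<in> X" using orb_sub[OF x0X] by blast
    moreover have "orb x = orb x0" using orb_same[OF x0X xo] .
    ultimately show "x \<in> {x \<in> X. orb x = orb x0}" by simp
  qed
  have "(\<Sum>k\<in>{0<..K}. card {x\<in>X. (f ^^ k) x = x})
      = (\<Sum>k\<in>{0<..K}. \<Sum>x\<in>X. (of_bool ((f ^^ k) x = x) :: nat))"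
    using fin by (simp only: card_filter_of_bool)
  also have "\<dots> = (\<Sum>x\<in>X. \<Sum>k\<in>{0<..K}. (of_bool ((f ^^ k) x = x) :: nat))"
    by (rule sum.swap)
  also have "\<dots> = (\<Sum>x\<in>X. card {k\<in>{0<..K}. (f ^^ k) x = x})"
    by (simp only: card_filter_of_bool finite_greaterThanAtMost)
  also have "\<dots> = (\<Sum>x\<in>X. K div p x)"
  proof (rule sum.cong[OF refl])
    fix x assume x: "x \<in> X"
    have "{k\<in>{0<..K}. (f ^^ k) x = x} = {k\<in>{0<..K}. p x dvd k}" using pdvd[OF x] by auto
    then show "card {k\<in>{0<..K}. (f ^^ k) x = x} = K div p x"
      using card_multiples[of "p x" K] pP[OF x] pK[OF x] by simp
  qed
  also have "\<dots> = (\<Sum>Ob\<in>orb ` X. \<Sum>x\<in>{x\<in>X. orb x = Ob}. K div p x)"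
    using fin by (rule sum.image_gen)
  also have "\<dots> = (\<Sum>Ob\<in>orb ` X. K)"
  proof (rule sum.cong[OF refl])
    fix Ob assume "Ob \<in> orb ` X"
    then obtain x0 where x0: "x0 \<in> X" "Ob = orb x0" by auto
    have "(\<Sum>x\<in>{x\<in>X. orb x = Ob}. K div p x) = (\<Sum>x\<in>orb x0. K div p x0)"
    proof (rule sum.cong)
      show "{x\<in>X. orb x = Ob} = orb x0" using fiber[OF x0(1)] x0 by simp
    next
      fix x assume "x \<in> orb x0"
      then have "x \<in> X" "orb x = orb x0" using orb_sub[OF x0(1)] orb_same[OF x0(1)] by auto
      then show "K div p x = K div p x0" using card_orb x0 by metis
    qed
    also have "\<dots> = p x0 * (K div p x0)" using card_orb[OF x0(1)] by simp
    also have "\<dots> = K" using pK[OF x0(1)] by simp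
    finally show "(\<Sum>x\<in>{x\<in>X. orb x = Ob}. K div p x) = K" .
  qed
  also have "\<dots> = K * num_cycles X f" unfolding num_cycles_def orb_def by simp
  finally show ?thesis by simp
qed



lemma count_residue_class:
  fixes N' g y0 :: int
  assumes "N' > 0" "g > 0"
  shows "card {x\<in>{0..<g * N'}. x mod N' = y0 mod N'} = nat g"
proof -
  define z where "z = y0 mod N'"
  have z: "0 \<le> z" "z < N'" using assms unfolding z_def by auto
  have "{x\<in>{0..<g * N'}. x mod N' = z} = (\<lambda>i. z + N' * i) ` {0..<g}"
  proof (intro equalityI subsetI)
    fix x assume "x \<in> {x\<in>{0..<g * N'}. x mod N' = z}"
    then have x: "0 \<le> x" "x < g * N'" "x mod N' = z" by auto
    have "x = z + N' * (x div N')" using x(3) by (metis add.commute mult_div_mod_eq)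
    moreover have "0 \<le> x div N'" using x(1) assms(1) by (simp add: pos_imp_zdiv_nonneg_iff)
    moreover have "x div N' < g"
    proof -
      have "N' * (x div N') \<le> x" using x(1) assms(1)
        by (metis add.commute le_add_same_cancel2 mult_div_mod_eq pos_mod_sign)
      then have "N' * (x div N') < N' * g" using x(2) by (simp add: mult.commute)
      then show ?thesis using assms(1) by (simp add: mult_less_cancel_left)
    qed
    ultimately show "x \<in> (\<lambda>i. z + N' * i) ` {0..<g}" by force
  next
    fix x assume "x \<in> (\<lambda>i. z + N' * i) ` {0..<g}"
    then obtain i where i: "x = z + N' * i" "0 \<le> i" "i < g" using imageE atLeastLessThan_iff by (metis (no_types, lifting))
    have "N' * i \<le> N' * (g - 1)" using i assms by simp
    then have "x < g * N'" using i z by (simp add: algebra_simps)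
    moreover have "0 \<le> x" using i z assms by simp
    moreover have "x mod N' = z" using i z by simp
    ultimately show "x \<in> {x\<in>{0..<g * N'}. x mod N' = z}" by simp
  qed
  moreover have "inj_on (\<lambda>i. z + N' * i) {0..<g}" using assms by (auto intro: inj_onI)
  ultimately show ?thesis unfolding z_def[symmetric] by (simp add: card_image)
qed

lemma lin_cong_count:
  assumes "n > 0"
  shows "card {x\<in>{0..<int n}. int n dvd a * x + b} =
    (if gcd a (int n) dvd b then nat (gcd a (int n)) else 0)"
proof (cases "gcd a (int n) dvd b")
  case False
  have "{x\<in>{0..<int n}. int n dvd a * x + b} = {}"
  proof (rule ccontr)
    assume "{x\<in>{0..<int n}. int n dvd a * x + b} \<noteq> {}"
    then obtain x where "int n dvd a * x + b" by auto
    then have "gcd a (int n) dvd a * x + b" by (meson dvd_trans gcd_dvd2)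
    moreover have "gcd a (int n) dvd a * x" by simp
    ultimately have "gcd a (int n) dvd b" by (metis add_diff_cancel_left' dvd_diff)
    with False show False by simp
  qed
  then have c0: "card {x\<in>{0..<int n}. int n dvd a * x + b} = 0" by (simp only: card.empty)
  show ?thesis using False c0 by simp
next
  case True
  define N where "N = int n"
  define g where "g = gcd a N"
  define N' where "N' = N div g"
  have N0: "N > 0" using assms N_def by simp
  have g0: "g > 0" using N0 g_def by simp
  have NN: "N = g * N'" unfolding N'_def g_def by simp
  have N'0: "N' > 0" using NN N0 g0 by (simp add: zero_less_mult_iff)
  have "gcd a N dvd - b" using True N_def by simp
  then obtain x0 where x0: "[a * x0 = - b] (mod N)" using cong_solve_dvd_int by blast
  have iff: "N dvd a * x + b \<longleftrightarrow> x mod N' = x0 mod N'" for x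
  proof -
    have "[a * x + b = a * x - a * x0] (mod N)"
      using x0 by (simp add: cong_iff_dvd_diff algebra_simps)
    then have "N dvd a * x + b \<longleftrightarrow> N dvd (x - x0) * a"
      by (metis cong_dvd_iff mult.commute right_diff_distrib)
    also have "\<dots> \<longleftrightarrow> N div gcd N a dvd x - x0" using dvd_mult_div_gcd_int N0 by blast
    also have "N div gcd N a = N'" unfolding N'_def g_def by (simp add: gcd.commute)
    finally show ?thesis by (simp add: mod_eq_dvd_iff)
  qed
  have "{x\<in>{0..<int n}. int n dvd a * x + b} = {x\<in>{0..<g * N'}. x mod N' = x0 mod N'}"
    using iff NN N_def by auto
  then show ?thesis using count_residue_class[OF N'0 g0] True g_def N_def by simp
qed



lemma coprime_dvd_nat_int:
  assumes "coprime r (int n)" "m dvd n"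
  shows "coprime r (int m)"
proof -
  obtain k where "n = m * k" using assms(2) by (auto simp: dvd_def)
  then have "coprime r (int m * int k)" using assms(1) by simp
  then show ?thesis by simp
qed

lemma kappa_pos:
  assumes "d > 0" "coprime r (int d)"
  shows "kappa d r t > 0"
proof -
  define w where "w = mord d r"
  define c where "c = t * S w r"
  define q where "q = int d div gcd (int d) c"
  have o0: "w > 0" using mord_pos[OF assms] by (simp add: w_def)
  have g0: "gcd (int d) c > 0" using assms by simp
  have q0: "q > 0" unfolding q_def using assms g0
    by (simp add: pos_imp_zdiv_pos_iff zdvd_imp_le)
  have "int d * int w div gcd (int d) c = int w * q"
    unfolding q_def by (metis dvd_div_mult gcd_dvd1 mult.commute)
  then have "kappa d r t = w * nat q" unfolding kappa_def w_def[symmetric] c_def[symmetric]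
    using q0 by (simp add: nat_mult_distrib)
  then show ?thesis using o0 q0 by simp
qed

lemma dvd_pow_gcd_ord:
  assumes "n > 0" "coprime r (int n)" "m dvd n" "m > 0" "int m dvd r ^ a - 1"
  shows "int m dvd r ^ (gcd a (mord n r)) - 1"
proof -
  have cm: "coprime r (int m)" using coprime_dvd_nat_int[OF assms(2,3)] .
  have 1: "mord m r dvd a" using mord_dvd'[OF assms(4) cm, of a] assms(5) by blast
  have "int n dvd r ^ mord n r - 1" using mord_dvd'[OF assms(1,2), of "mord n r"] dvd_refl by blast
  moreover have "int m dvd int n" using assms(3) by (simp only: int_dvd_int_iff)
  ultimately have "int m dvd r ^ mord n r - 1" by (rule dvd_trans[rotated])
  then have 2: "mord m r dvd mord n r" using mord_dvd'[OF assms(4) cm] by blast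
  have "mord m r dvd gcd a (mord n r)" using 1 2 by (rule gcd_greatest)
  then show ?thesis using mord_dvd'[OF assms(4) cm] by blast
qed

lemma dvd_pow_gcd_ord':
  assumes "m > 0" "coprime r (int m)" "int m dvd r ^ (gcd a b) - 1"
  shows "int m dvd r ^ a - 1"
proof -
  have "mord m r dvd gcd a b" using mord_dvd'[OF assms(1,2)] assms(3) by blast
  then have "mord m r dvd a" using dvd_trans gcd_dvd1 by blast
  then show ?thesis using mord_dvd'[OF assms(1,2)] by blast
qed

lemma gcd_pow_reduce:
  assumes "n > 0" "coprime r (int n)"
  shows "gcd (r ^ a - 1) (int n) = gcd (r ^ (gcd a (mord n r)) - 1) (int n)"
proof -
  define e where "e = gcd (r ^ a - 1) (int n)"
  define e' where "e' = gcd (r ^ (gcd a (mord n r)) - 1) (int n)"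
  have e0: "e > 0" "e' > 0" using assms unfolding e_def e'_def by auto
  have ee: "int (nat e) = e" "int (nat e') = e'" using e0 by auto
  have "int (nat e) dvd int n" "int (nat e') dvd int n" unfolding ee unfolding e_def e'_def by simp_all
  then have en: "nat e dvd n" "nat e' dvd n" by (simp_all only: int_dvd_int_iff)
  have p1: "nat e > 0" "nat e' > 0" using e0 by auto
  have h1: "int (nat e) dvd r ^ a - 1" unfolding ee e_def by simp
  have "int (nat e) dvd r ^ (gcd a (mord n r)) - 1"
    using dvd_pow_gcd_ord[OF assms en(1) p1(1) h1] .
  then have 1: "e dvd e'" unfolding ee unfolding e'_def by (simp add: e_def)
  have cm: "coprime r (int (nat e'))" using coprime_dvd_nat_int[OF assms(2) en(2)] .
  have h2: "int (nat e') dvd r ^ (gcd a (mord n r)) - 1" unfolding ee e'_def by simp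
  have "int (nat e') dvd r ^ a - 1"
    using dvd_pow_gcd_ord'[OF p1(2) cm h2] .
  then have 2: "e' dvd e" unfolding ee unfolding e_def by (simp add: e'_def)
  show ?thesis using zdvd_antisym_nonneg[OF _ _ 1 2] e0 unfolding e_def e'_def by simp
qed

lemma gcd_combo:
  fixes j kap w :: nat
  assumes "w > 0"
  shows "gcd (j * kap) w = gcd (gcd j (w div gcd kap w) * kap) w"
proof -
  define g where "g = gcd kap w"
  have g0: "g > 0" using assms g_def by simp
  obtain a where a: "kap = g * a" unfolding g_def by (metis gcd_dvd1 dvd_def)
  obtain b where b: "w = g * b" unfolding g_def by (metis gcd_dvd2 dvd_def)
  have wb: "w div g = b" using b g0 by simp
  have ab: "coprime b a"
  proof -
    have "coprime (kap div g) (w div g)" using div_gcd_coprime[of kap w] assms unfolding g_def by auto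
    moreover have "kap div g = a" using a g0 by simp
    ultimately show ?thesis using wb by (simp add: coprime_commute)
  qed
  have "gcd (j * kap) w = g * gcd (j * a) b" using a b by (simp add: gcd_mult_distrib_nat ac_simps)
  also have "gcd (j * a) b = gcd j b" using ab by (simp add: gcd_mult_left_right_cancel)
  finally have 1: "gcd (j * kap) w = g * gcd j b" .
  have "gcd (gcd j b * kap) w = g * gcd (gcd j b * a) b" using a b by (simp add: gcd_mult_distrib_nat ac_simps)
  also have "gcd (gcd j b * a) b = gcd (gcd j b) b" using ab by (simp add: gcd_mult_left_right_cancel)
  also have "gcd (gcd j b) b = gcd j b" by simp
  finally have 2: "gcd (gcd j b * kap) w = g * gcd j b" .
  show ?thesis using 1 2 wb unfolding g_def[symmetric] by simp
qed

lemma sqf_coprime: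
  fixes n u :: nat
  assumes "squarefree n" "u dvd n"
  shows "coprime u (n div u)"
proof (rule coprimeI)
  fix c assume c: "c dvd u" "c dvd n div u"
  have "c * c dvd u * (n div u)" using c by (simp add: mult_dvd_mono)
  also have "u * (n div u) = n" using assms(2) by simp
  finally have "c ^ 2 dvd n" by (simp add: power2_eq_square)
  then show "is_unit c" using squarefreeD[OF assms(1)] by simp
qed

lemma sqf_step:
  assumes "squarefree n" "n > 0"
    and "int n dvd r ^ L - 1" "int d dvd t * S L r" "gcd (r - 1) (int n) dvd int d"
  shows "int n dvd t * S L r"
proof -
  define u where "u = gcd (r - 1) (int n)"
  have u0: "u > 0" using assms(2) u_def by simp
  define n' where "n' = int n div u"
  define rr where "rr = (r - 1) div u"
  have nn: "int n = u * n'" unfolding n'_def u_def by simp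
  have rrr: "r - 1 = u * rr" unfolding rr_def u_def by simp
  have cop: "coprime n' rr"
  proof -
    have "coprime ((r - 1) div u) (int n div u)" using div_gcd_coprime[of "r - 1" "int n"] assms(2)
      unfolding u_def by auto
    then show ?thesis unfolding n'_def rr_def by (simp add: coprime_commute)
  qed
  have "int n dvd (r - 1) * S L r" using assms(3) S_geom[of r L] by simp
  then have "u * n' dvd u * (rr * S L r)" using nn rrr by (simp add: ac_simps)
  then have "n' dvd rr * S L r" using u0 by simp
  then have "n' dvd S L r" using cop by (simp add: coprime_dvd_mult_right_iff)
  then have 1: "n' dvd t * S L r" by simp
  have 2: "u dvd t * S L r" using assms(4,5) unfolding u_def by (meson dvd_trans)
  have "coprime u n'"
  proof -
    have "int (nat u) dvd int n" using u0 unfolding u_def by simp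
    then have un: "nat u dvd n" by (simp only: int_dvd_int_iff)
    have "coprime (nat u) (n div nat u)" using sqf_coprime[OF assms(1) un] .
    then have "gcd (nat u) (n div nat u) = 1" by (simp only: coprime_iff_gcd_eq_1)
    then have "gcd (int (nat u)) (int (n div nat u)) = 1" by (simp only: gcd_int_int_eq of_nat_1)
    moreover have "int (n div nat u) = n'" unfolding n'_def using u0 by (simp add: zdiv_int)
    ultimately show ?thesis using u0 by (simp add: coprime_iff_gcd_eq_1)
  qed
  then have "u * n' dvd t * S L r" using 1 2 divides_mult by blast
  then show ?thesis using nn by simp
qed



lemma dih_pow:
  assumes "0 \<le> i" "i < int n"
  shows "(dihedral_aut n r t ^^ k) (i, True) = ((r ^ k * i + t * S k r) mod int n, True)"
proof (induction k)
  case 0 then show ?case using assms by (simp add: S_def)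
next
  case (Suc k)
  define y where "y = r ^ k * i + t * S k r"
  have "(dihedral_aut n r t ^^ Suc k) (i, True) = dihedral_aut n r t ((y mod int n, True))"
    using Suc unfolding y_def by simp
  also have "\<dots> = ((r * (y mod int n) + t) mod int n, True)" by (simp add: dihedral_aut_def)
  also have "(r * (y mod int n) + t) mod int n = (r * y + t) mod int n"
    by (metis mod_add_left_eq mod_mult_right_eq)
  also have "r * y + t = r ^ Suc k * i + t * S (Suc k) r"
    unfolding y_def S_Suc' by (simp add: algebra_simps)
  finally show ?case .
qed

lemma mod_eq_self_iff_dvd:
  fixes a x N :: int
  assumes "0 \<le> x" "x < N"
  shows "a mod N = x \<longleftrightarrow> N dvd a - x"
proof -
  have "x mod N = x" using assms by simp
  then have "a mod N = x \<longleftrightarrow> a mod N = x mod N" by simp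
  also have "\<dots> \<longleftrightarrow> N dvd a - x" by (rule mod_eq_dvd_iff)
  finally show ?thesis .
qed

lemma V_image: "V n = (\<lambda>i. (i, True)) ` {0..<int n}"
  unfolding V_def by auto

lemma dih_fix_card:
  assumes "n > 0"
  shows "card {y\<in>V n. (dihedral_aut n r t ^^ k) y = y} =
    (if gcd (r ^ k - 1) (int n) dvd t * S k r then nat (gcd (r ^ k - 1) (int n)) else 0)"
proof -
  have "{y\<in>V n. (dihedral_aut n r t ^^ k) y = y} =
      (\<lambda>i. (i, True)) ` {x\<in>{0..<int n}. int n dvd (r ^ k - 1) * x + t * S k r}"
  proof (intro equalityI subsetI)
    fix y assume "y \<in> {y\<in>V n. (dihedral_aut n r t ^^ k) y = y}"
    then obtain i where i: "y = (i, True)" "0 \<le> i" "i < int n" "(dihedral_aut n r t ^^ k) y = y"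
      unfolding V_def by auto
    then have "(r ^ k * i + t * S k r) mod int n = i" using dih_pow[OF i(2,3)] by simp
    then have "int n dvd (r ^ k * i + t * S k r) - i" using mod_eq_self_iff_dvd i by blast
    moreover have "(r ^ k * i + t * S k r) - i = (r ^ k - 1) * i + t * S k r" by (simp add: algebra_simps)
    ultimately show "y \<in> (\<lambda>i. (i, True)) ` {x\<in>{0..<int n}. int n dvd (r ^ k - 1) * x + t * S k r}"
      using i by auto
  next
    fix y assume "y \<in> (\<lambda>i. (i, True)) ` {x\<in>{0..<int n}. int n dvd (r ^ k - 1) * x + t * S k r}"
    then obtain i where i: "y = (i, True)" "0 \<le> i" "i < int n" "int n dvd (r ^ k - 1) * i + t * S k r"
      by auto
    have e: "(r ^ k * i + t * S k r) - i = (r ^ k - 1) * i + t * S k r" by (simp add: algebra_simps)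
    have "int n dvd (r ^ k * i + t * S k r) - i" unfolding e using i(4) .
    then have "(r ^ k * i + t * S k r) mod int n = i" using mod_eq_self_iff_dvd[OF i(2,3)] by blast
    then show "y \<in> {y\<in>V n. (dihedral_aut n r t ^^ k) y = y}"
      using dih_pow[OF i(2,3)] i unfolding V_def by auto
  qed
  moreover have "inj (\<lambda>i::int. (i, True))" by (auto intro: injI)
  ultimately have "card {y\<in>V n. (dihedral_aut n r t ^^ k) y = y} =
      card {x\<in>{0..<int n}. int n dvd (r ^ k - 1) * x + t * S k r}"
    by (simp add: card_image inj_on_subset[of _ UNIV])
  then show ?thesis using lin_cong_count[OF assms] by simp
qed

lemma dih_burnside:
  assumes "n > 0" "coprime r (int n)"
  shows "kappa n r t * num_cycles (V n) (dihedral_aut n r t) =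
    (\<Sum>k\<in>{0<..kappa n r t}. (if gcd (r ^ k - 1) (int n) dvd t * S k r then nat (gcd (r ^ k - 1) (int n)) else 0))"
proof -
  define K where "K = kappa n r t"
  have K0: "K > 0" unfolding K_def using kappa_pos[OF assms] .
  have KK: "int n dvd r ^ K - 1 \<and> int n dvd t * S K r"
    using kappa_dvd[OF assms, of K t] unfolding K_def by simp
  have fin: "finite (V n)" unfolding V_image by simp
  have cl: "\<forall>x\<in>V n. dihedral_aut n r t x \<in> V n"
    unfolding V_def dihedral_aut_def using assms(1) by auto
  have per: "\<forall>x\<in>V n. (dihedral_aut n r t ^^ K) x = x"
  proof
    fix x assume "x \<in> V n"
    then obtain i where i: "x = (i, True)" "0 \<le> i" "i < int n" unfolding V_def by auto
    have e: "(r ^ K * i + t * S K r) - i = (r ^ K - 1) * i + t * S K r" by (simp add: algebra_simps)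
    have "int n dvd (r ^ K - 1) * i + t * S K r" using KK by simp
    then have "int n dvd (r ^ K * i + t * S K r) - i" unfolding e .
    then have "(r ^ K * i + t * S K r) mod int n = i" using mod_eq_self_iff_dvd[OF i(2,3)] by blast
    then show "(dihedral_aut n r t ^^ K) x = x" using dih_pow[OF i(2,3)] i(1) by simp
  qed
  show ?thesis using burnside_cyclic[OF fin cl per K0] dih_fix_card[OF assms(1)] unfolding K_def
    by simp
qed



theorem lemma4p3:
  fixes n :: nat and r t :: int
  assumes "n > 1" and "squarefree n" and "coprime r (int n)"
  shows "real (num_cycles (V n) (dihedral_aut n r t)) =
    (\<Sum>(d, l) \<in> {(d, l). 0 < d \<and> 0 < l \<and> d dvd n
                  \<and> l dvd (mord n r div gcd (kappa d r t) (mord n r))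
                  \<and> gcd (r ^ (l * kappa d r t) - 1) (int n) = int d}.
       real d / real (kappa n r t) *
       real (totient (mord n r div (l * gcd (kappa d r t) (mord n r)))))"
proof -
  have n0: "n > 0" using assms(1) by simp
  note cpn = assms(3)
  define w where "w = mord n r"
  define K where "K = kappa n r t"
  define C where "C = num_cycles (V n) (dihedral_aut n r t)"
  define kap where "kap d = kappa d r t" for d
  define M where "M d = w div gcd (kap d) w" for d
  define Gk where "Gk k = nat (gcd (r ^ k - 1) (int n))" for k
  define I where "I = {(d, l). 0 < d \<and> 0 < l \<and> d dvd n
                  \<and> l dvd (mord n r div gcd (kappa d r t) (mord n r))
                  \<and> gcd (r ^ (l * kappa d r t) - 1) (int n) = int d}"
  define F where "F = {k\<in>{0<..K}. int (Gk k) dvd t * S k r}"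
  define pr where "pr k = (Gk k, gcd (k div kap (Gk k)) (M (Gk k)))" for k
  have w0: "w > 0" unfolding w_def using mord_pos[OF n0 cpn] .
  have K0: "K > 0" unfolding K_def using kappa_pos[OF n0 cpn] .
  have KK: "int n dvd r ^ K - 1 \<and> int n dvd t * S K r"
    using kappa_dvd[OF n0 cpn, of K t] unfolding K_def by simp
  have wK: "w dvd K" using KK mord_dvd'[OF n0 cpn] unfolding w_def by blast
  have GkI: "int (Gk k) = gcd (r ^ k - 1) (int n)" for k unfolding Gk_def by simp
  have Gk0: "Gk k > 0" for k unfolding Gk_def using n0 by simp
  have Gkn: "Gk k dvd n" for k
  proof -
    have "int (Gk k) dvd int n" unfolding GkI by simp
    then show ?thesis by (simp only: int_dvd_int_iff)
  qed
  have cpd: "coprime r (int d)" if "d dvd n" for d using coprime_dvd_nat_int[OF cpn that] .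
  have kap0: "kap d > 0" if "d dvd n" "d > 0" for d
    unfolding kap_def using kappa_pos[OF that(2) cpd[OF that(1)]] .
  have M0: "M d > 0" for d
  proof -
    have "gcd (kap d) w dvd w" by simp
    moreover have "gcd (kap d) w > 0" using w0 by simp
    ultimately have "gcd (kap d) w \<le> w" using w0 by (simp add: dvd_imp_le)
    then show ?thesis unfolding M_def using \<open>gcd (kap d) w > 0\<close> by (simp add: div_greater_zero_iff)
  qed
  have kapd: "(int d dvd r ^ k - 1 \<and> int d dvd t * S k r) \<longleftrightarrow> kap d dvd k" if "d dvd n" "d > 0" for d k
    unfolding kap_def using kappa_dvd[OF that(2) cpd[OF that(1)]] .
  have kapK: "kap d dvd K" if "d dvd n" "d > 0" for d
  proof -
    have "int d dvd int n" using that(1) by simp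
    then have "int d dvd r ^ K - 1 \<and> int d dvd t * S K r" using KK by (meson dvd_trans)
    then show ?thesis using kapd[OF that] by blast
  qed
  have Gdep: "Gk (j * kap d) = Gk (gcd j (M d) * kap d)" for j d
  proof -
    have "gcd (r ^ (j * kap d) - 1) (int n) = gcd (r ^ (gcd (j * kap d) w) - 1) (int n)"
      using gcd_pow_reduce[OF n0 cpn] unfolding w_def by blast
    also have "gcd (j * kap d) w = gcd (gcd j (M d) * kap d) w"
      unfolding M_def using gcd_combo[OF w0] by blast
    also have "gcd (r ^ (gcd (gcd j (M d) * kap d) w) - 1) (int n) = gcd (r ^ (gcd j (M d) * kap d) - 1) (int n)"
      using gcd_pow_reduce[OF n0 cpn] unfolding w_def by metis
    finally show ?thesis unfolding Gk_def by simp
  qed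
  have Keq: "K = kap d * M d" if "(d, l) \<in> I" for d l
  proof -
    have d: "0 < d" "0 < l" "d dvd n" "gcd (r ^ (l * kap d) - 1) (int n) = int d"
      using that unfolding I_def kap_def by auto
    define L where "L = lcm (kap d) w"
    have "gcd (kap d) w dvd w" by simp
    then have LM: "kap d * M d = L" unfolding L_def M_def lcm_nat_def by (rule div_mult_swap)
    have LK: "L dvd K" unfolding L_def using kapK[OF d(3,1)] wK by (rule lcm_least)
    have wL: "w dvd L" unfolding L_def by simp
    have kL: "kap d dvd L" unfolding L_def by simp
    have 1: "int n dvd r ^ L - 1" using mord_dvd'[OF n0 cpn] wL unfolding w_def by blast
    have 2: "int d dvd t * S L r" using kapd[OF d(3,1)] kL by blast
    have 3: "gcd (r - 1) (int n) dvd int d"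
    proof -
      have "r - 1 dvd r ^ (l * kap d) - 1" using S_geom[of r "l * kap d"] by (metis dvd_triv_left)
      then have "gcd (r - 1) (int n) dvd r ^ (l * kap d) - 1" by (meson dvd_trans gcd_dvd1)
      moreover have "gcd (r - 1) (int n) dvd int n" by simp
      ultimately show ?thesis using d(4) by (metis gcd_greatest)
    qed
    have "int n dvd t * S L r" using sqf_step[OF assms(2) n0 1 2 3] .
    then have "K dvd L" using kappa_dvd[OF n0 cpn, of L t] 1 unfolding K_def by blast
    then show ?thesis using LK LM by (simp add: dvd_antisym)
  qed
  have B: "K * C = (\<Sum>k\<in>{0<..K}. (if int (Gk k) dvd t * S k r then Gk k else 0))"
    using dih_burnside[OF n0 cpn, of t] unfolding K_def C_def GkI Gk_def by simp
  also have "\<dots> = (\<Sum>k\<in>F. Gk k)"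
    unfolding F_def by (rule sum.inter_filter[symmetric]) simp
  finally have B2: "K * C = (\<Sum>k\<in>F. Gk k)" .
  have finF: "finite F" unfolding F_def by simp
  have finI: "finite I"
  proof (rule finite_subset)
    show "I \<subseteq> {..n} \<times> {..w}"
    proof
      fix p assume "p \<in> I"
      then obtain d l where p: "p = (d, l)" "0 < l" "d dvd n" "l dvd M d"
        unfolding I_def M_def kap_def w_def by auto
      have "d \<le> n" using p(3) n0 by (simp add: dvd_imp_le)
      moreover have "l \<le> M d" using p(4) M0 by (simp add: dvd_imp_le)
      moreover have "M d \<le> w" unfolding M_def by simp
      ultimately show "p \<in> {..n} \<times> {..w}" using p(1) by simp
    qed
  qed simp
  have prI: "pr ` F \<subseteq> I"
  proof
    fix p assume "p \<in> pr ` F"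
    then obtain k where k: "k \<in> F" "p = pr k" by auto
    define d where "d = Gk k"
    have d: "0 < d" "d dvd n" unfolding d_def using Gk0 Gkn by auto
    have k1: "0 < k" "k \<le> K" "int d dvd t * S k r" using k(1) unfolding F_def d_def by auto
    have "int d dvd r ^ k - 1" unfolding d_def GkI by simp
    then have "kap d dvd k" using kapd[OF d(2,1)] k1 by blast
    then obtain j where j: "k = j * kap d" by (auto simp: dvd_def mult.commute)
    have kd: "k div kap d = j" using j kap0[OF d(2,1)] by simp
    have "j > 0" using j k1 by (auto intro: Nat.gr0I)
    define l where "l = gcd j (M d)"
    have l: "0 < l" "l dvd M d" unfolding l_def using M0 by auto
    have "gcd (r ^ (l * kap d) - 1) (int n) = int (Gk (l * kap d))" by (simp add: GkI)
    also have "Gk (l * kap d) = Gk k" unfolding l_def j using Gdep by simp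
    finally have "gcd (r ^ (l * kap d) - 1) (int n) = int d" unfolding d_def .
    then have "(d, l) \<in> I" using d l unfolding I_def kap_def M_def w_def by auto
    moreover have "p = (d, l)" using k(2) unfolding pr_def d_def[symmetric] kd l_def by simp
    ultimately show "p \<in> I" by simp
  qed
  have fiber: "card {k\<in>F. pr k = (d, l)} = totient (M d div l)" if "(d, l) \<in> I" for d l
  proof -
    have d: "0 < d" "0 < l" "d dvd n" "l dvd M d" "gcd (r ^ (l * kap d) - 1) (int n) = int d"
      using that unfolding I_def kap_def M_def w_def by auto
    have Gl: "Gk (l * kap d) = d" using d(5) unfolding Gk_def by simp
    have k0: "kap d > 0" using kap0[OF d(3,1)] .
    have eqS: "{k\<in>F. pr k = (d, l)} = (\<lambda>j. j * kap d) ` {j\<in>{0<..M d}. gcd j (M d) = l}"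
    proof (intro equalityI subsetI)
      fix k assume "k \<in> {k\<in>F. pr k = (d, l)}"
      then have k: "k \<in> F" "Gk k = d" "gcd (k div kap d) (M d) = l" unfolding pr_def by auto
      have k1: "0 < k" "k \<le> K" "int d dvd t * S k r" using k(1,2) unfolding F_def by auto
      have "int d dvd r ^ k - 1" using k(2) GkI[of k] by (metis gcd_dvd1)
      then have "kap d dvd k" using kapd[OF d(3,1)] k1 by blast
      then obtain j where j: "k = j * kap d" by (auto simp: dvd_def mult.commute)
      have kd: "k div kap d = j" using j k0 by simp
      have "j > 0" using j k1 by (auto intro: Nat.gr0I)
      moreover have "j \<le> M d"
      proof -
        have "j * kap d \<le> M d * kap d" using k1(2) j Keq[OF that] by (simp add: mult.commute)
        then show ?thesis using k0 by simp
      qed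
      moreover have "gcd j (M d) = l" using k(3) kd by simp
      ultimately show "k \<in> (\<lambda>j. j * kap d) ` {j\<in>{0<..M d}. gcd j (M d) = l}" using j by auto
    next
      fix k assume "k \<in> (\<lambda>j. j * kap d) ` {j\<in>{0<..M d}. gcd j (M d) = l}"
      then obtain j where j: "k = j * kap d" "0 < j" "j \<le> M d" "gcd j (M d) = l" by auto
      have kd: "k div kap d = j" using j k0 by simp
      have "Gk k = d" using Gdep[of j d] j Gl by simp
      moreover have "0 < k" using j k0 by simp
      moreover have "k \<le> K" using j Keq[OF that] by (simp add: mult.commute)
      moreover have "int d dvd t * S k r" using kapd[OF d(3,1), of k] j by simp
      ultimately show "k \<in> {k\<in>F. pr k = (d, l)}" unfolding F_def pr_def using kd j by simp
    qed
    have inj: "inj_on (\<lambda>j. j * kap d) {j\<in>{0<..M d}. gcd j (M d) = l}"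
    proof (rule inj_onI)
      fix x y assume "x * kap d = y * kap d"
      then show "x = y" using k0 by simp
    qed
    have "card {k\<in>F. pr k = (d, l)} = card ((\<lambda>j. j * kap d) ` {j\<in>{0<..M d}. gcd j (M d) = l})"
      by (simp only: eqS)
    also have "\<dots> = card {j\<in>{0<..M d}. gcd j (M d) = l}" by (rule card_image[OF inj])
    also have "\<dots> = totient (M d div l)" using card_gcd_eq_totient[OF M0 d(4)] .
    finally show ?thesis .
  qed
  have "(\<Sum>k\<in>F. Gk k) = (\<Sum>p\<in>I. \<Sum>k\<in>{k\<in>F. pr k = p}. Gk k)"
    using sum.group[OF finF finI prI, of Gk] by simp
  also have "\<dots> = (\<Sum>(d, l)\<in>I. d * totient (M d div l))"
  proof (rule sum.cong[OF refl])
    fix p assume pI: "p \<in> I"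
    obtain d l where p: "p = (d, l)" by (cases p)
    have "(\<Sum>k\<in>{k\<in>F. pr k = p}. Gk k) = (\<Sum>k\<in>{k\<in>F. pr k = p}. d)"
      by (rule sum.cong) (auto simp: pr_def p)
    also have "\<dots> = d * card {k\<in>F. pr k = (d, l)}" using p by simp
    also have "\<dots> = d * totient (M d div l)" using fiber pI p by simp
    finally show "(\<Sum>k\<in>{k\<in>F. pr k = p}. Gk k) = (case p of (d, l) \<Rightarrow> d * totient (M d div l))"
      using p by simp
  qed
  finally have B3: "K * C = (\<Sum>(d, l)\<in>I. d * totient (M d div l))" using B2 by simp
  have tot: "M d div l = w div (l * gcd (kap d) w)" for d l
  proof -
    have "w div (l * gcd (kap d) w) = w div (gcd (kap d) w * l)" by (simp only: mult.commute)
    also have "\<dots> = w div gcd (kap d) w div l" by (rule div_mult2_eq)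
    finally show ?thesis unfolding M_def by simp
  qed
  have "(\<Sum>(d, l)\<in>I. real d / real K * real (totient (w div (l * gcd (kap d) w))))
      = (\<Sum>(d, l)\<in>I. real (d * totient (M d div l))) / real K"
    unfolding sum_divide_distrib by (rule sum.cong[OF refl]) (auto simp: tot)
  also have "\<dots> = real (K * C) / real K" unfolding B3 by (simp add: case_prod_beta)
  also have "\<dots> = real C" using K0 by simp
  finally show ?thesis unfolding C_def I_def K_def kap_def w_def by simp
qed

end
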